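(* Let $2<p<\infty$ and $T\in B(L^{p})$. Then for every $\epsilon>0$ there exists $\delta>0$ such that $\|Tf\|_2<\epsilon$ for every $f\in L^{p}$ with $\|f\|_p\le1$ and $\|f\|_2<\delta$.
   Context: $L^{p}=L^{p}([0,1],\mu)$, $\mu$ Lebesgue measure; $\|\cdot\|_s$ is the $L^s$ norm. *)

theory Defs
  imports "HOL-Analysis.Analysis"
begin

abbreviation unitI :: "real measure" where
  "unitI \<equiv> lebesgue_on {0..1}"

text \<open>Representatives of elements of L^p([0,1]) (real-valued).\<close>
definition Lp_space :: "real \<Rightarrow> (real \<Rightarrow> real) set" where
  "Lp_space p = {f. f \<in> borel_measurable unitI \<and> integrable unitI (\<lambda>x. \<bar>f x\<bar> powr p)}"

definition Lp_norm :: "real \<Rightarrow> (real \<Rightarrow> real) \<Rightarrow> real" where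
  "Lp_norm s f = (LINT x|unitI. \<bar>f x\<bar> powr s) powr (1 / s)"

definition bounded_Lp_operator :: "real \<Rightarrow> ((real \<Rightarrow> real) \<Rightarrow> (real \<Rightarrow> real)) \<Rightarrow> bool" where
  "bounded_Lp_operator p T \<longleftrightarrow>
     (\<forall>f\<in>Lp_space p. T f \<in> Lp_space p) \<and>
     (\<forall>f\<in>Lp_space p. \<forall>g\<in>Lp_space p. (AE x in unitI. f x = g x) \<longrightarrow> (AE x in unitI. T f x = T g x)) \<and>
     (\<forall>f\<in>Lp_space p. \<forall>g\<in>Lp_space p. \<forall>a b::real.
        AE x in unitI. T (\<lambda>y. a * f y + b * g y) x = a * T f x + b * T g x) \<and>
     (\<exists>C. \<forall>f\<in>Lp_space p. Lp_norm p (T f) \<le> C * Lp_norm p f)"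

end

theory Submission
  imports Defs
begin



lemma fmU: "finite_measure unitI" by (simp add: finite_measure_lebesgue_on)

lemma meas_U: "measure unitI {0..1} = 1" by (simp add: measure_restrict_space)

lemma int_const_U: "(LINT x|unitI. (c::real)) = c"
  by (simp add: meas_U)

lemma integrable_const_U: "integrable unitI (\<lambda>x. c::real)"
  using finite_measure.integrable_const[OF fmU] by blast

lemma abs_powr2: "\<bar>x::real\<bar> powr 2 = x^2" by simp

lemma LpD: "f \<in> Lp_space p \<Longrightarrow> f \<in> borel_measurable unitI \<and> integrable unitI (\<lambda>x. \<bar>f x\<bar> powr p)"
  by (simp add: Lp_space_def)

lemma sq_pt_bound:
  fixes v l p :: real
  assumes "2 < p" "0 < l"
  shows "v^2 \<le> 1/l^2 + l powr (p-2) * \<bar>v\<bar> powr p"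
proof (cases "l * \<bar>v\<bar> \<le> 1")
  case True
  then have "\<bar>v\<bar> \<le> 1/l" using assms by (simp add: field_simps)
  then have "v^2 \<le> (1/l)^2"
    by (metis abs_ge_zero power2_abs power_mono)
  moreover have "0 \<le> l powr (p-2) * \<bar>v\<bar> powr p" by simp
  ultimately show ?thesis by (smt (verit) power_one_over)
next
  case False
  then have v0: "\<bar>v\<bar> > 0" using assms by (metis abs_ge_zero mult_zero_right order_le_less zero_le_one not_le)
  have "1 \<le> (l * \<bar>v\<bar>) powr (p-2)" using False assms by (simp add: ge_one_powr_ge_zero)
  then have "v^2 \<le> (l * \<bar>v\<bar>) powr (p-2) * \<bar>v\<bar> powr 2"
    by (simp add: mult_le_cancel_right1)
  also have "\<dots> = l powr (p-2) * \<bar>v\<bar> powr p"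
  proof -
    have e: "\<bar>v\<bar> powr (p-2) * v^2 = \<bar>v\<bar> powr p"
      using powr_add[of "\<bar>v\<bar>" "p-2" 2] by simp
    show ?thesis using assms v0 e by (simp add: powr_mult)
  qed
  finally show ?thesis
    by (smt (verit) zero_le_divide_1_iff zero_le_power2)
qed

lemma Lp_sq:
  assumes "2 < p" "0 < l" "f \<in> Lp_space p"
  shows "integrable unitI (\<lambda>x. (f x)^2)"
    and "(LINT x|unitI. (f x)^2) \<le> 1/l^2 + l powr (p-2) * (LINT x|unitI. \<bar>f x\<bar> powr p)"
proof -
  have m: "f \<in> borel_measurable unitI" and i: "integrable unitI (\<lambda>x. \<bar>f x\<bar> powr p)"
    using LpD[OF assms(3)] by auto
  have ib: "integrable unitI (\<lambda>x. 1/l^2 + l powr (p-2) * \<bar>f x\<bar> powr p)"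
    using i integrable_const_U by auto
  show ii: "integrable unitI (\<lambda>x. (f x)^2)"
    by (rule Bochner_Integration.integrable_bound[OF ib]) (use m sq_pt_bound[OF assms(1,2)] in auto)
  have "(LINT x|unitI. (f x)^2) \<le> (LINT x|unitI. 1/l^2 + l powr (p-2) * \<bar>f x\<bar> powr p)"
    by (rule integral_mono[OF ii ib]) (use sq_pt_bound[OF assms(1,2)] in auto)
  also have "\<dots> = 1/l^2 + l powr (p-2) * (LINT x|unitI. \<bar>f x\<bar> powr p)"
    using i by (simp add: Bochner_Integration.integral_add integrable_const_U int_const_U meas_U)
  finally show "(LINT x|unitI. (f x)^2) \<le> 1/l^2 + l powr (p-2) * (LINT x|unitI. \<bar>f x\<bar> powr p)" .
qed

lemma Lp_dom:
  assumes "0 < p" "f \<in> Lp_space p" "g \<in> borel_measurable unitI" "\<And>x. x \<in> {0..1} \<Longrightarrow> \<bar>g x\<bar> \<le> \<bar>f x\<bar>"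
  shows "g \<in> Lp_space p"
proof -
  have i: "integrable unitI (\<lambda>x. \<bar>f x\<bar> powr p)" using LpD[OF assms(2)] by auto
  have "integrable unitI (\<lambda>x. \<bar>g x\<bar> powr p)"
    by (rule Bochner_Integration.integrable_bound[OF i]) (use assms in \<open>auto intro!: powr_mono2\<close>)
  then show ?thesis using assms(3) by (simp add: Lp_space_def)
qed

lemma Lp_lin:
  assumes "0 < p" "f \<in> Lp_space p" "g \<in> Lp_space p"
  shows "(\<lambda>y. a * f y + b * g y) \<in> Lp_space p"
proof -
  have mf: "f \<in> borel_measurable unitI" and i: "integrable unitI (\<lambda>x. \<bar>f x\<bar> powr p)"
    using LpD[OF assms(2)] by auto
  have mg: "g \<in> borel_measurable unitI" and j: "integrable unitI (\<lambda>x. \<bar>g x\<bar> powr p)"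
    using LpD[OF assms(3)] by auto
  have pt: "\<bar>a * f x + b * g x\<bar> powr p \<le> (2*\<bar>a\<bar>+1) powr p * \<bar>f x\<bar> powr p + (2*\<bar>b\<bar>+1) powr p * \<bar>g x\<bar> powr p" for x
  proof (cases "\<bar>a * f x\<bar> \<le> \<bar>b * g x\<bar>")
    case True
    have t1: "\<bar>a * f x + b * g x\<bar> \<le> 2*\<bar>b * g x\<bar>"
      using True abs_triangle_ineq[of "a * f x" "b * g x"] by linarith
    have t2: "2*\<bar>b * g x\<bar> \<le> (2*\<bar>b\<bar>+1) * \<bar>g x\<bar>"
      by (simp add: abs_mult distrib_right)
    from t1 t2 have "\<bar>a * f x + b * g x\<bar> \<le> (2*\<bar>b\<bar>+1) * \<bar>g x\<bar>" by linarith
    then have "\<bar>a * f x + b * g x\<bar> powr p \<le> ((2*\<bar>b\<bar>+1) * \<bar>g x\<bar>) powr p"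
      using assms(1) by (intro powr_mono2) auto
    also have "\<dots> = (2*\<bar>b\<bar>+1) powr p * \<bar>g x\<bar> powr p" by (simp add: powr_mult)
    finally show ?thesis by (simp add: add_increasing add_increasing2)
  next
    case False
    have t1: "\<bar>a * f x + b * g x\<bar> \<le> 2*\<bar>a * f x\<bar>"
      using False abs_triangle_ineq[of "a * f x" "b * g x"] by linarith
    have t2: "2*\<bar>a * f x\<bar> \<le> (2*\<bar>a\<bar>+1) * \<bar>f x\<bar>"
      by (simp add: abs_mult distrib_right)
    from t1 t2 have "\<bar>a * f x + b * g x\<bar> \<le> (2*\<bar>a\<bar>+1) * \<bar>f x\<bar>" by linarith
    then have "\<bar>a * f x + b * g x\<bar> powr p \<le> ((2*\<bar>a\<bar>+1) * \<bar>f x\<bar>) powr p"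
      using assms(1) by (intro powr_mono2) auto
    also have "\<dots> = (2*\<bar>a\<bar>+1) powr p * \<bar>f x\<bar> powr p" by (simp add: powr_mult)
    finally show ?thesis by (simp add: add_increasing add_increasing2)
  qed
  have ib: "integrable unitI (\<lambda>x. (2*\<bar>a\<bar>+1) powr p * \<bar>f x\<bar> powr p + (2*\<bar>b\<bar>+1) powr p * \<bar>g x\<bar> powr p)"
    using i j by auto
  have "integrable unitI (\<lambda>x. \<bar>a * f x + b * g x\<bar> powr p)"
  proof (rule Bochner_Integration.integrable_bound[OF ib])
    show "(\<lambda>x. \<bar>a * f x + b * g x\<bar> powr p) \<in> borel_measurable unitI" using mf mg by measurable
    show "AE x in unitI. norm (\<bar>a * f x + b * g x\<bar> powr p) \<le> norm ((2*\<bar>a\<bar>+1) powr p * \<bar>f x\<bar> powr p + (2*\<bar>b\<bar>+1) powr p * \<bar>g x\<bar> powr p)"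
    proof (intro AE_I2)
      fix x
      have "0 \<le> (2*\<bar>a\<bar>+1) powr p * \<bar>f x\<bar> powr p + (2*\<bar>b\<bar>+1) powr p * \<bar>g x\<bar> powr p" by simp
      then show "norm (\<bar>a * f x + b * g x\<bar> powr p) \<le> norm ((2*\<bar>a\<bar>+1) powr p * \<bar>f x\<bar> powr p + (2*\<bar>b\<bar>+1) powr p * \<bar>g x\<bar> powr p)"
        using pt[of x] by simp
    qed
  qed
  moreover have "(\<lambda>y. a * f y + b * g y) \<in> borel_measurable unitI" using mf mg by measurable
  ultimately show ?thesis by (simp add: Lp_space_def)
qed




lemma Tbound:
  assumes "0 < p" "bounded_Lp_operator p T"
  shows "\<exists>C\<ge>0. \<forall>u\<in>Lp_space p. (LINT x|unitI. \<bar>T u x\<bar> powr p) \<le> C * (LINT x|unitI. \<bar>u x\<bar> powr p)"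
proof -
  obtain C0 where C0: "\<And>f. f \<in> Lp_space p \<Longrightarrow> Lp_norm p (T f) \<le> C0 * Lp_norm p f"
    using assms(2) unfolding bounded_Lp_operator_def by blast
  define D where "D = max C0 0"
  have D0: "0 \<le> D" by (simp add: D_def)
  have "(LINT x|unitI. \<bar>T u x\<bar> powr p) \<le> D powr p * (LINT x|unitI. \<bar>u x\<bar> powr p)"
    if u: "u \<in> Lp_space p" for u
  proof -
    define X where "X = (LINT x|unitI. \<bar>T u x\<bar> powr p)"
    define Y where "Y = (LINT x|unitI. \<bar>u x\<bar> powr p)"
    have X0: "0 \<le> X" unfolding X_def by simp
    have Y0: "0 \<le> Y" unfolding Y_def by simp
    have "X powr (1/p) \<le> C0 * Y powr (1/p)"
      using C0[OF u] unfolding Lp_norm_def X_def Y_def by simp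
    also have "\<dots> \<le> D * Y powr (1/p)"
      unfolding D_def by (intro mult_right_mono) auto
    finally have le: "X powr (1/p) \<le> D * Y powr (1/p)" .
    have "X = (X powr (1/p)) powr p" using X0 assms(1) by (simp add: powr_powr)
    also have "\<dots> \<le> (D * Y powr (1/p)) powr p"
      using le assms(1) by (intro powr_mono2) auto
    also have "\<dots> = D powr p * Y"
      using D0 Y0 assms(1) by (simp add: powr_mult powr_powr)
    finally show ?thesis unfolding X_def Y_def .
  qed
  then show ?thesis using D0 by (intro exI[of _ "D powr p"]) auto
qed

lemma Tlin:
  assumes "bounded_Lp_operator p T" "f \<in> Lp_space p" "g \<in> Lp_space p"
  shows "AE x in unitI. T (\<lambda>y. a * f y + b * g y) x = a * T f x + b * T g x"
  using assms unfolding bounded_Lp_operator_def by blast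

lemma TLp:
  assumes "bounded_Lp_operator p T" "f \<in> Lp_space p"
  shows "T f \<in> Lp_space p"
  using assms unfolding bounded_Lp_operator_def by blast

lemma Small:
  assumes "2 < p" "bounded_Lp_operator p T"
  shows "\<forall>\<kappa>>0. \<exists>\<rho>>0. \<forall>u\<in>Lp_space p. (LINT x|unitI. \<bar>u x\<bar> powr p) < \<rho> \<longrightarrow> (LINT x|unitI. (T u x)^2) < \<kappa>"
proof (intro allI impI)
  fix \<kappa> :: real assume k: "0 < \<kappa>"
  obtain C where C0: "0 \<le> C" and C: "\<And>u. u\<in>Lp_space p \<Longrightarrow> (LINT x|unitI. \<bar>T u x\<bar> powr p) \<le> C * (LINT x|unitI. \<bar>u x\<bar> powr p)"
    using Tbound[of p T] assms by auto
  define l where "l = 2 / sqrt \<kappa>"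
  have l0: "0 < l" using k by (simp add: l_def)
  have l2: "1 / l^2 = \<kappa> / 4" using k by (simp add: l_def power_divide)
  define K where "K = l powr (p-2) * C"
  have K0: "0 \<le> K" using C0 by (simp add: K_def)
  define \<rho> where "\<rho> = \<kappa> / (2 * (K + 1))"
  have r0: "0 < \<rho>" using k K0 by (simp add: \<rho>_def)
  have "(LINT x|unitI. (T u x)^2) < \<kappa>" if u: "u \<in> Lp_space p" and small: "(LINT x|unitI. \<bar>u x\<bar> powr p) < \<rho>" for u
  proof -
    have Tu: "T u \<in> Lp_space p" using TLp[OF assms(2) u] .
    have "(LINT x|unitI. (T u x)^2) \<le> 1/l^2 + l powr (p-2) * (LINT x|unitI. \<bar>T u x\<bar> powr p)"
      using Lp_sq(2)[OF assms(1) l0 Tu] .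
    also have "\<dots> \<le> 1/l^2 + l powr (p-2) * (C * (LINT x|unitI. \<bar>u x\<bar> powr p))"
      using C[OF u] by (intro add_left_mono mult_left_mono) auto
    also have "\<dots> = \<kappa>/4 + K * (LINT x|unitI. \<bar>u x\<bar> powr p)"
      using l2 by (simp add: K_def)
    also have "\<dots> \<le> \<kappa>/4 + K * \<rho>"
      using small K0 by (intro add_left_mono mult_left_mono) auto
    also have "\<dots> < \<kappa>"
    proof -
      have "K * \<rho> = \<kappa> * K / (2 * (K+1))" using K0 by (simp add: \<rho>_def)
      also have "\<dots> \<le> \<kappa> / 2" using K0 k by (simp add: field_simps)
      finally show ?thesis using k by simp
    qed
    finally show ?thesis .
  qed
  then show "\<exists>\<rho>>0. \<forall>u\<in>Lp_space p. (LINT x|unitI. \<bar>u x\<bar> powr p) < \<rho> \<longrightarrow> (LINT x|unitI. (T u x)^2) < \<kappa>"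
    using r0 by blast
qed




lemma AbsCont:
  assumes phi: "integrable unitI \<phi>" and nn: "\<And>x. 0 \<le> \<phi> x" and g: "0 < (\<gamma>::real)"
  shows "\<exists>\<eta>>0. \<forall>B\<in>sets unitI. measure unitI B \<le> \<eta> \<longrightarrow> (LINT x|unitI. indicator B x * \<phi> x) < \<gamma>"
proof -
  have mphi: "\<phi> \<in> borel_measurable unitI" using phi by auto
  define s where "s n x = min (\<phi> x) (real n)" for n x
  have ms: "(s n) \<in> borel_measurable unitI" for n unfolding s_def using mphi by measurable
  have lim: "(\<lambda>n. LINT x|unitI. s n x) \<longlonglongrightarrow> (LINT x|unitI. \<phi> x)"
  proof (rule integral_dominated_convergence[where w=\<phi>])
    show "\<phi> \<in> borel_measurable unitI" by (fact mphi)
    show "(s n) \<in> borel_measurable unitI" for n by (fact ms)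
    show "integrable unitI \<phi>" by (fact phi)
    show "AE x in unitI. (\<lambda>n. s n x) \<longlonglongrightarrow> \<phi> x"
    proof (intro AE_I2)
      fix x
      obtain N where N: "\<phi> x \<le> real N" using real_arch_simple by blast
      have "eventually (\<lambda>n. s n x = \<phi> x) sequentially"
        unfolding eventually_sequentially s_def using N
        by (intro exI[of _ N]) auto
      then show "(\<lambda>n. s n x) \<longlonglongrightarrow> \<phi> x" by (rule tendsto_eventually)
    qed
    show "AE x in unitI. norm (s n x) \<le> \<phi> x" for n
      using nn unfolding s_def by (intro AE_I2) auto
  qed
  then obtain N where N: "norm ((LINT x|unitI. s N x) - (LINT x|unitI. \<phi> x)) < \<gamma>/2"
    using g unfolding LIMSEQ_iff by (metis half_gt_zero order_refl)
  have sint: "integrable unitI (s N)"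
    by (rule Bochner_Integration.integrable_bound[OF phi]) (use nn ms in \<open>auto simp: s_def\<close>)
  define \<eta> where "\<eta> = \<gamma> / (2 * (real N + 1))"
  have e0: "0 < \<eta>" using g by (simp add: \<eta>_def)
  have "(LINT x|unitI. indicator B x * \<phi> x) < \<gamma>" if B: "B \<in> sets unitI" "measure unitI B \<le> \<eta>" for B
  proof -
    have iB: "integrable unitI (indicator B :: real \<Rightarrow> real)"
      using B(1) finite_measure.emeasure_finite[OF fmU] by (auto simp: less_top)
    have ir: "integrable unitI (\<lambda>x. real N * indicator B x + (\<phi> x - s N x))"
      using iB phi sint by auto
    have "(LINT x|unitI. indicator B x * \<phi> x) \<le> (LINT x|unitI. real N * indicator B x + (\<phi> x - s N x))"
    proof (rule integral_mono'[OF ir])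
      fix x
      show "indicator B x * \<phi> x \<le> real N * indicator B x + (\<phi> x - s N x)"
        by (cases "x \<in> B") (auto simp: s_def indicator_def)
      show "0 \<le> real N * indicator B x + (\<phi> x - s N x)"
        by (auto simp: s_def indicator_def)
    qed
    also have "\<dots> = real N * measure unitI B + ((LINT x|unitI. \<phi> x) - (LINT x|unitI. s N x))"
    proof -
      have Bsub: "B \<inter> {0..1} = B" using sets.sets_into_space[OF B(1)] by auto
      show ?thesis using iB phi sint B(1) Bsub by (simp add: Bochner_Integration.integral_diff)
    qed
    also have "\<dots> < \<gamma>"
    proof -
      have "real N * measure unitI B \<le> real N * \<eta>" using B(2) by (intro mult_left_mono) auto
      also have "\<dots> \<le> \<gamma>/2" using g by (simp add: \<eta>_def field_simps)
      finally have "real N * measure unitI B \<le> \<gamma>/2" .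
      moreover have "integral\<^sup>L unitI \<phi> - integral\<^sup>L unitI (s N) < \<gamma>/2"
        using N unfolding real_norm_def by arith
      ultimately show ?thesis by linarith
    qed
    finally show ?thesis .
  qed
  then show ?thesis using e0 by blast
qed




lemma LemA:
  assumes p2: "2 < p" and T: "bounded_Lp_operator p T" and e0: "0 < e"
    and neg: "\<forall>\<delta>>0. \<exists>f\<in>Lp_space p. (LINT x|unitI. \<bar>f x\<bar> powr p) \<le> 1 \<and> (LINT x|unitI. (f x)^2) < \<delta> \<and> e \<le> (LINT x|unitI. (T f x)^2)"
    and eta: "0 < \<eta>"
  shows "\<exists>h\<in>Lp_space p. (LINT x|unitI. \<bar>h x\<bar> powr p) \<le> 1 \<and> e/4 < (LINT x|unitI. (T h x)^2)
           \<and> measure unitI {x\<in>{0..1}. h x \<noteq> 0} \<le> \<eta>"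
proof -
  have p0: "0 < p" using p2 by simp
  define M where "M = max 1 (1/\<eta>)"
  have M1: "1 \<le> M" by (simp add: M_def)
  have M0: "0 < M" using M1 by simp
  have Mp: "1/\<eta> \<le> M powr p"
  proof -
    have "1/\<eta> \<le> M" by (simp add: M_def)
    also have "M = M powr 1" using M0 by simp
    also have "\<dots> \<le> M powr p" using M1 p2 by (intro powr_mono) auto
    finally show ?thesis .
  qed
  obtain \<rho> where r0: "0 < \<rho>" and r: "\<And>u. u\<in>Lp_space p \<Longrightarrow> (LINT x|unitI. \<bar>u x\<bar> powr p) < \<rho> \<Longrightarrow> (LINT x|unitI. (T u x)^2) < e/4"
    using Small[OF p2 T] e0 by (metis zero_less_divide_iff zero_less_numeral)
  define K where "K = M powr (p-2)"
  have K0: "0 \<le> K" by (simp add: K_def)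
  define \<delta> where "\<delta> = \<rho> / (K + 1)"
  have d0: "0 < \<delta>" using r0 K0 by (simp add: \<delta>_def)
  obtain f where f: "f \<in> Lp_space p" and f1: "(LINT x|unitI. \<bar>f x\<bar> powr p) \<le> 1"
    and f2: "(LINT x|unitI. (f x)^2) < \<delta>" and f3: "e \<le> (LINT x|unitI. (T f x)^2)"
    using neg d0 by blast
  have mf: "f \<in> borel_measurable unitI" and fi: "integrable unitI (\<lambda>x. \<bar>f x\<bar> powr p)"
    using LpD[OF f] by auto
  define g where "g y = (if \<bar>f y\<bar> \<le> M then f y else 0)" for y
  define h where "h y = (if \<bar>f y\<bar> \<le> M then 0 else f y)" for y
  have mg: "g \<in> borel_measurable unitI" unfolding g_def using mf by measurable
  have mh: "h \<in> borel_measurable unitI" unfolding h_def using mf by measurable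
  have gL: "g \<in> Lp_space p" by (rule Lp_dom[OF p0 f mg]) (auto simp: g_def)
  have hL: "h \<in> Lp_space p" by (rule Lp_dom[OF p0 f mh]) (auto simp: h_def)
  have gp: "(LINT x|unitI. \<bar>g x\<bar> powr p) \<le> (LINT x|unitI. K * (f x)^2)"
  proof (rule integral_mono')
    show "integrable unitI (\<lambda>x. K * (f x)^2)"
      using Lp_sq(1)[OF p2 _ f, of 1] by simp
    fix x
    show "0 \<le> K * (f x)^2" using K0 by simp
    show "\<bar>g x\<bar> powr p \<le> K * (f x)^2"
    proof (cases "\<bar>f x\<bar> \<le> M \<and> f x \<noteq> 0")
      case True
      have "\<bar>g x\<bar> powr p = \<bar>f x\<bar> powr (p-2) * (f x)^2"
        using True powr_add[of "\<bar>f x\<bar>" "p-2" 2] by (simp add: g_def)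
      also have "\<dots> \<le> K * (f x)^2"
        unfolding K_def using True p2 by (intro mult_right_mono powr_mono2) auto
      finally show ?thesis .
    next
      case False
      then have "g x = 0" by (auto simp: g_def)
      then show ?thesis using K0 by simp
    qed
  qed
  also have "\<dots> = K * (LINT x|unitI. (f x)^2)" by simp
  also have "\<dots> \<le> K * \<delta>" using f2 K0 by (intro mult_left_mono) auto
  also have "\<dots> < \<rho>"
  proof -
    have "K * \<delta> = \<rho> * (K / (K+1))" using K0 by (simp add: \<delta>_def)
    also have "\<dots> < \<rho> * 1" using K0 r0 by (intro mult_strict_left_mono) auto
    finally show ?thesis by simp
  qed
  finally have Tg: "(LINT x|unitI. (T g x)^2) < e/4" using r[OF gL] by blast
  have fgh: "(\<lambda>y. g y + h y) = f" by (auto simp: g_def h_def)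
  have AEf: "AE x in unitI. T f x = T g x + T h x"
    using Tlin[OF T gL hL, of 1 1] by (simp add: fgh)
  have TgL: "T g \<in> Lp_space p" using TLp[OF T gL] .
  have ThL: "T h \<in> Lp_space p" using TLp[OF T hL] .
  have TfL: "T f \<in> Lp_space p" using TLp[OF T f] .
  have ig: "integrable unitI (\<lambda>x. (T g x)^2)" using Lp_sq(1)[OF p2 _ TgL, of 1] by simp
  have ih: "integrable unitI (\<lambda>x. (T h x)^2)" using Lp_sq(1)[OF p2 _ ThL, of 1] by simp
  have ifi: "integrable unitI (\<lambda>x. (T f x)^2)" using Lp_sq(1)[OF p2 _ TfL, of 1] by simp
  have "(LINT x|unitI. (T f x)^2) \<le> (LINT x|unitI. 2 * (T g x)^2 + 2 * (T h x)^2)"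
  proof (rule integral_mono_AE[OF ifi])
    show "integrable unitI (\<lambda>x. 2 * (T g x)^2 + 2 * (T h x)^2)" using ig ih by auto
    show "AE x in unitI. (T f x)^2 \<le> 2 * (T g x)^2 + 2 * (T h x)^2"
      using AEf
    proof eventually_elim
      case (elim x)
      have "0 \<le> (T g x - T h x)^2" by simp
      then show ?case using elim by (simp add: power2_eq_square algebra_simps)
    qed
  qed
  also have "\<dots> = 2 * (LINT x|unitI. (T g x)^2) + 2 * (LINT x|unitI. (T h x)^2)"
    using ig ih by (simp add: Bochner_Integration.integral_add)
  finally have "e \<le> 2 * (LINT x|unitI. (T g x)^2) + 2 * (LINT x|unitI. (T h x)^2)"
    using f3 by linarith
  then have Th: "e/4 < (LINT x|unitI. (T h x)^2)" using Tg by linarith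
  have hp: "(LINT x|unitI. \<bar>h x\<bar> powr p) \<le> 1"
  proof -
    have "(LINT x|unitI. \<bar>h x\<bar> powr p) \<le> (LINT x|unitI. \<bar>f x\<bar> powr p)"
      using LpD[OF hL] fi by (intro integral_mono) (auto simp: h_def)
    then show ?thesis using f1 by linarith
  qed
  have meas: "measure unitI {x\<in>{0..1}. h x \<noteq> 0} \<le> \<eta>"
  proof -
    have sub: "{x\<in>{0..1}. h x \<noteq> 0} \<subseteq> {x\<in>space unitI. \<bar>f x\<bar> powr p \<ge> M powr p}"
      using M0 p0 by (auto simp: h_def intro!: powr_mono2)
    have S: "{x\<in>space unitI. \<bar>f x\<bar> powr p \<ge> M powr p} \<in> sets unitI" using mf by measurable
    have "measure unitI {x\<in>{0..1}. h x \<noteq> 0} \<le> measure unitI {x\<in>space unitI. \<bar>f x\<bar> powr p \<ge> M powr p}"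
      by (rule finite_measure.finite_measure_mono[OF fmU sub S])
    also have "\<dots> \<le> (LINT x|unitI. \<bar>f x\<bar> powr p) / M powr p"
      by (rule integral_Markov_inequality_measure[OF fi, where A="{0..1}"]) (use M0 in auto)
    also have "\<dots> \<le> 1 / M powr p"
      using f1 M0 by (intro divide_right_mono) auto
    also have "\<dots> \<le> \<eta>"
    proof -
      have "1 / M powr p \<le> 1 / (1/\<eta>)" using Mp eta M0 by (intro divide_left_mono) auto
      then show ?thesis by simp
    qed
    finally show ?thesis .
  qed
  show ?thesis using hL hp Th meas by blast
qed




lemma sq_lower:
  fixes a b t :: real
  assumes "0 < t"
  shows "(1 - t) * a^2 - (1/t) * b^2 \<le> (a - b)^2"
proof -
  have eq: "t * ((a-b)^2 - ((1 - t) * a^2 - (1/t) * b^2)) = (t * a - b)^2 + t * b^2"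
    using assms by (simp add: power2_eq_square field_simps)
  have "0 \<le> (t * a - b)^2 + t * b^2" using assms by simp
  then have "0 \<le> t * ((a-b)^2 - ((1 - t) * a^2 - (1/t) * b^2))"
    using eq by simp
  then show ?thesis using assms by (simp add: zero_le_mult_iff)
qed

lemma Iter:
  assumes p2: "2 < p" and T: "bounded_Lp_operator p T" and e0: "0 < e"
    and neg: "\<forall>\<delta>>0. \<exists>f\<in>Lp_space p. (LINT x|unitI. \<bar>f x\<bar> powr p) \<le> 1 \<and> (LINT x|unitI. (f x)^2) < \<delta> \<and> e \<le> (LINT x|unitI. (T f x)^2)"
  shows "\<exists>G\<in>Lp_space p. (LINT x|unitI. \<bar>G x\<bar> powr p) \<le> real (Suc n) \<and> real (Suc n) * (e/4) < (LINT x|unitI. (T G x)^2)"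
proof (induction n)
  case 0
  obtain h where "h \<in> Lp_space p" "(LINT x|unitI. \<bar>h x\<bar> powr p) \<le> 1" "e/4 < (LINT x|unitI. (T h x)^2)"
    using LemA[OF p2 T e0 neg, of 1] by auto
  then show ?case by auto
next
  case (Suc n)
  have p0: "0 < p" using p2 by simp
  define m where "m = real (Suc n)"
  define c where "c = e/4"
  have c0: "0 < c" using e0 by (simp add: c_def)
  have m0: "0 < m" by (simp add: m_def)
  obtain G where GL: "G \<in> Lp_space p" and Gp: "(LINT x|unitI. \<bar>G x\<bar> powr p) \<le> m"
    and GT: "m * c < (LINT x|unitI. (T G x)^2)"
    using Suc.IH unfolding m_def c_def by blast
  define A where "A = (LINT x|unitI. (T G x)^2)"
  define \<gamma> where "\<gamma> = A - m * c"
  have g0: "0 < \<gamma>" using GT by (simp add: \<gamma>_def A_def)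
  have A0: "0 < A" using GT m0 c0 unfolding A_def by (smt (verit) mult_pos_pos)
  define t where "t = \<gamma> / (2 * A)"
  have t0: "0 < t" using g0 A0 by (simp add: t_def)
  have tA: "t * A = \<gamma> / 2" using A0 by (simp add: t_def)
  define \<kappa> where "\<kappa> = t * \<gamma> / 4"
  have k0: "0 < \<kappa>" using t0 g0 by (simp add: \<kappa>_def)
  obtain \<rho> where r0: "0 < \<rho>" and r: "\<And>u. u\<in>Lp_space p \<Longrightarrow> (LINT x|unitI. \<bar>u x\<bar> powr p) < \<rho> \<Longrightarrow> (LINT x|unitI. (T u x)^2) < \<kappa>"
    using Small[OF p2 T] k0 by blast
  have mG: "G \<in> borel_measurable unitI" and Gi: "integrable unitI (\<lambda>x. \<bar>G x\<bar> powr p)"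
    using LpD[OF GL] by auto
  obtain \<eta> where eta0: "0 < \<eta>" and eta: "\<And>B. B \<in> sets unitI \<Longrightarrow> measure unitI B \<le> \<eta> \<Longrightarrow> (LINT x|unitI. indicator B x * \<bar>G x\<bar> powr p) < \<rho>"
    using AbsCont[OF Gi _ r0] by auto
  obtain h where hL: "h \<in> Lp_space p" and hp: "(LINT x|unitI. \<bar>h x\<bar> powr p) \<le> 1"
    and Th: "e/4 < (LINT x|unitI. (T h x)^2)" and hm: "measure unitI {x\<in>{0..1}. h x \<noteq> 0} \<le> \<eta>"
    using LemA[OF p2 T e0 neg eta0] by blast
  have mh: "h \<in> borel_measurable unitI" and hi: "integrable unitI (\<lambda>x. \<bar>h x\<bar> powr p)"
    using LpD[OF hL] by auto
  define B where "B = {x\<in>{0..1}. h x \<noteq> 0}"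
  have BS: "B \<in> sets unitI"
  proof -
    have "{x\<in>space unitI. h x \<noteq> 0} \<in> sets unitI" using mh by measurable
    then show ?thesis by (simp add: B_def)
  qed
  define G1 where "G1 y = (if h y = 0 then G y else 0)" for y
  define G2 where "G2 y = (if h y = 0 then 0 else G y)" for y
  have mG1: "G1 \<in> borel_measurable unitI" unfolding G1_def using mG mh by measurable
  have mG2: "G2 \<in> borel_measurable unitI" unfolding G2_def using mG mh by measurable
  have G1L: "G1 \<in> Lp_space p" by (rule Lp_dom[OF p0 GL mG1]) (auto simp: G1_def)
  have G2L: "G2 \<in> Lp_space p" by (rule Lp_dom[OF p0 GL mG2]) (auto simp: G2_def)
  have "(LINT x|unitI. \<bar>G2 x\<bar> powr p) = (LINT x|unitI. indicator B x * \<bar>G x\<bar> powr p)"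
    by (rule Bochner_Integration.integral_cong) (auto simp: G2_def B_def indicator_def)
  also have "\<dots> < \<rho>" using eta[OF BS] hm by (simp add: B_def)
  finally have TG2: "(LINT x|unitI. (T G2 x)^2) < \<kappa>" using r[OF G2L] by blast
  have e12: "(\<lambda>y. G1 y + G2 y) = G" by (auto simp: G1_def G2_def)
  have AEG: "AE x in unitI. T G x = T G1 x + T G2 x"
    using Tlin[OF T G1L G2L, of 1 1] by (simp add: e12)
  have TGL: "T G \<in> Lp_space p" using TLp[OF T GL] .
  have TG1L: "T G1 \<in> Lp_space p" using TLp[OF T G1L] .
  have TG2L: "T G2 \<in> Lp_space p" using TLp[OF T G2L] .
  have ThL: "T h \<in> Lp_space p" using TLp[OF T hL] .
  have iG: "integrable unitI (\<lambda>x. (T G x)^2)" using Lp_sq(1)[OF p2 _ TGL, of 1] by simp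
  have iG1: "integrable unitI (\<lambda>x. (T G1 x)^2)" using Lp_sq(1)[OF p2 _ TG1L, of 1] by simp
  have iG2: "integrable unitI (\<lambda>x. (T G2 x)^2)" using Lp_sq(1)[OF p2 _ TG2L, of 1] by simp
  have ih: "integrable unitI (\<lambda>x. (T h x)^2)" using Lp_sq(1)[OF p2 _ ThL, of 1] by simp
  have "(LINT x|unitI. (1 - t) * (T G x)^2 - (1/t) * (T G2 x)^2) \<le> (LINT x|unitI. (T G1 x)^2)"
  proof (rule integral_mono_AE)
    show "integrable unitI (\<lambda>x. (1 - t) * (T G x)^2 - (1/t) * (T G2 x)^2)" using iG iG2 by auto
    show "integrable unitI (\<lambda>x. (T G1 x)^2)" by (fact iG1)
    show "AE x in unitI. (1 - t) * (T G x)^2 - (1/t) * (T G2 x)^2 \<le> (T G1 x)^2"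
      using AEG
    proof eventually_elim
      case (elim x)
      have "T G1 x = T G x - T G2 x" using elim by simp
      then show ?case using sq_lower[OF t0, of "T G x" "T G2 x"] by simp
    qed
  qed
  also have "(LINT x|unitI. (1 - t) * (T G x)^2 - (1/t) * (T G2 x)^2) = (1 - t) * A - (1/t) * (LINT x|unitI. (T G2 x)^2)"
    using iG iG2 by (simp add: Bochner_Integration.integral_diff A_def)
  finally have low1: "(1 - t) * A - (1/t) * (LINT x|unitI. (T G2 x)^2) \<le> (LINT x|unitI. (T G1 x)^2)" .
  have "(1/t) * (LINT x|unitI. (T G2 x)^2) < (1/t) * \<kappa>"
    using TG2 t0 by (intro mult_strict_left_mono) auto
  also have "(1/t) * \<kappa> = \<gamma>/4" using t0 by (simp add: \<kappa>_def)
  finally have "(1 - t) * A - \<gamma>/4 < (LINT x|unitI. (T G1 x)^2)" using low1 by linarith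
  moreover have "(1 - t) * A = A - \<gamma>/2" using tA by (simp add: algebra_simps)
  ultimately have TG1: "m * c < (LINT x|unitI. (T G1 x)^2)"
    using g0 \<gamma>_def by linarith
  define r where "r = (if 0 \<le> (LINT x|unitI. T G1 x * T h x) then 1 else -1::real)"
  have r2: "r * r = 1" by (simp add: r_def)
  have rpos: "0 \<le> r * (LINT x|unitI. T G1 x * T h x)" by (simp add: r_def)
  define G' where "G' = (\<lambda>y. 1 * G1 y + r * h y)"
  have G'L: "G' \<in> Lp_space p" unfolding G'_def by (rule Lp_lin[OF p0 G1L hL])
  have "(LINT x|unitI. \<bar>G' x\<bar> powr p) \<le> (LINT x|unitI. \<bar>G x\<bar> powr p + \<bar>h x\<bar> powr p)"
  proof (rule integral_mono)
    show "integrable unitI (\<lambda>x. \<bar>G' x\<bar> powr p)" using LpD[OF G'L] by auto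
    show "integrable unitI (\<lambda>x. \<bar>G x\<bar> powr p + \<bar>h x\<bar> powr p)" using Gi hi by auto
    fix x
    show "\<bar>G' x\<bar> powr p \<le> \<bar>G x\<bar> powr p + \<bar>h x\<bar> powr p"
    proof (cases "h x = 0")
      case True then show ?thesis by (simp add: G'_def G1_def)
    next
      case False
      have "\<bar>r\<bar> = 1" by (simp add: r_def)
      then have "\<bar>G' x\<bar> = \<bar>h x\<bar>" using False by (simp add: G'_def G1_def abs_mult)
      then show ?thesis by simp
    qed
  qed
  also have "\<dots> = (LINT x|unitI. \<bar>G x\<bar> powr p) + (LINT x|unitI. \<bar>h x\<bar> powr p)"
    using Gi hi by (simp add: Bochner_Integration.integral_add)
  also have "\<dots> \<le> m + 1" using Gp hp by linarith
  finally have G'p: "(LINT x|unitI. \<bar>G' x\<bar> powr p) \<le> real (Suc (Suc n))" by (simp add: m_def)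
  have AEG': "AE x in unitI. T G' x = 1 * T G1 x + r * T h x"
    unfolding G'_def by (rule Tlin[OF T G1L hL])
  have m1: "T G1 \<in> borel_measurable unitI" using LpD[OF TG1L] by auto
  have m2: "T h \<in> borel_measurable unitI" using LpD[OF ThL] by auto
  have imix: "integrable unitI (\<lambda>x. T G1 x * T h x)"
  proof (rule Bochner_Integration.integrable_bound[where f="\<lambda>x. (T G1 x)^2 + (T h x)^2"])
    show "integrable unitI (\<lambda>x. (T G1 x)^2 + (T h x)^2)" using iG1 ih by auto
    show "(\<lambda>x. T G1 x * T h x) \<in> borel_measurable unitI" using m1 m2 by measurable
    show "AE x in unitI. norm (T G1 x * T h x) \<le> norm ((T G1 x)^2 + (T h x)^2)"
    proof (intro AE_I2)
      fix x
      have "0 \<le> (\<bar>T G1 x\<bar> - \<bar>T h x\<bar>)^2" by simp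
      then have "\<bar>T G1 x\<bar> * \<bar>T h x\<bar> \<le> (T G1 x)^2 + (T h x)^2"
        by (simp add: power2_eq_square algebra_simps) (smt (verit) abs_mult_self_eq mult_nonneg_nonneg abs_ge_zero)
      then show "norm (T G1 x * T h x) \<le> norm ((T G1 x)^2 + (T h x)^2)"
        by (simp add: abs_mult)
    qed
  qed
  have iG': "integrable unitI (\<lambda>x. (T G' x)^2)"
    using Lp_sq(1)[OF p2 _ TLp[OF T G'L], of 1] by simp
  have "(LINT x|unitI. (T G1 x)^2 + 2 * r * (T G1 x * T h x) + (T h x)^2) \<le> (LINT x|unitI. (T G' x)^2)"
  proof (rule integral_mono_AE)
    show "integrable unitI (\<lambda>x. (T G1 x)^2 + 2 * r * (T G1 x * T h x) + (T h x)^2)"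
      using iG1 imix ih by auto
    show "integrable unitI (\<lambda>x. (T G' x)^2)" by (fact iG')
    show "AE x in unitI. (T G1 x)^2 + 2 * r * (T G1 x * T h x) + (T h x)^2 \<le> (T G' x)^2"
      using AEG'
    proof eventually_elim
      case (elim x)
      have "(T G' x)^2 = (T G1 x)^2 + 2 * r * (T G1 x * T h x) + (r*r) * (T h x)^2"
        using elim by (simp add: power2_eq_square algebra_simps)
      then show ?case using r2 by simp
    qed
  qed
  also have "(LINT x|unitI. (T G1 x)^2 + 2 * r * (T G1 x * T h x) + (T h x)^2)
      = (LINT x|unitI. (T G1 x)^2) + 2 * r * (LINT x|unitI. T G1 x * T h x) + (LINT x|unitI. (T h x)^2)"
    using iG1 imix ih by (simp add: Bochner_Integration.integral_add)
  finally have "(LINT x|unitI. (T G1 x)^2) + 2 * r * (LINT x|unitI. T G1 x * T h x) + (LINT x|unitI. (T h x)^2) \<le> (LINT x|unitI. (T G' x)^2)" .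
  then have "m * c + c < (LINT x|unitI. (T G' x)^2)"
    using TG1 Th rpos unfolding c_def by linarith
  moreover have "real (Suc (Suc n)) * (e/4) = m * c + c" by (simp add: m_def c_def algebra_simps)
  ultimately have G'T: "real (Suc (Suc n)) * (e/4) < (LINT x|unitI. (T G' x)^2)"
    by linarith
  show ?case using G'L G'p G'T by blast
qed




lemma Lp2_eq: "Lp_norm 2 g = sqrt (LINT x|unitI. (g x)^2)"
  unfolding Lp_norm_def by (simp add: powr_half_sqrt)

lemma Lpp_le1:
  assumes "0 < p" "Lp_norm p f \<le> 1"
  shows "(LINT x|unitI. \<bar>f x\<bar> powr p) \<le> 1"
proof -
  define X where "X = (LINT x|unitI. \<bar>f x\<bar> powr p)"
  have X0: "0 \<le> X" unfolding X_def by simp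
  have "X = (X powr (1/p)) powr p" using X0 assms(1) by (simp add: powr_powr)
  also have "\<dots> \<le> 1 powr p"
    using assms X0 unfolding Lp_norm_def X_def by (intro powr_mono2) auto
  finally show ?thesis unfolding X_def by simp
qed

lemma powr_key:
  fixes N p :: real
  assumes "2 < p" "1 \<le> N"
  defines "l \<equiv> N powr (-1/p)"
  shows "0 < l" "1/l^2 = N powr (2/p)" "l powr (p-2) * N = N powr (2/p)"
    "N = N powr (2/p) * N powr (1 - 2/p)"
proof -
  have N0: "0 < N" using assms by simp
  show "0 < l" using N0 by (simp add: l_def)
  have "l^2 = N powr (-2/p)" using N0 unfolding l_def
    by (simp add: powr_powr[symmetric] powr_numeral[symmetric] powr_powr)
  then show "1/l^2 = N powr (2/p)" using N0 by (simp add: powr_minus_divide[symmetric])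
  have "l powr (p-2) = N powr (-1/p * (p-2))" using N0 by (simp add: l_def powr_powr)
  then have "l powr (p-2) * N = N powr (-1/p * (p-2) + 1)" using N0 powr_add[of N "-1/p * (p-2)" 1] by simp
  also have "-1/p * (p-2) + 1 = 2/p" using assms by (simp add: field_simps)
  finally show "l powr (p-2) * N = N powr (2/p)" .
  show "N = N powr (2/p) * N powr (1 - 2/p)" using N0 by (simp add: powr_add[symmetric])
qed




theorem lemma5p4:
  fixes p :: real and T :: "(real \<Rightarrow> real) \<Rightarrow> (real \<Rightarrow> real)"
  assumes "2 < p" and "bounded_Lp_operator p T"
  shows "\<forall>\<epsilon>>0. \<exists>\<delta>>0. \<forall>f\<in>Lp_space p.
           Lp_norm p f \<le> 1 \<and> Lp_norm 2 f < \<delta> \<longrightarrow> Lp_norm 2 (T f) < \<epsilon>"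
proof (rule ccontr)
  note p2 = assms(1) and T = assms(2)
  have p0: "0 < p" using p2 by simp
  assume "\<not> ?thesis"
  then obtain \<epsilon> :: real where e0: "0 < \<epsilon>" and bad: "\<And>\<delta>. 0 < \<delta> \<Longrightarrow> \<exists>f\<in>Lp_space p.
      Lp_norm p f \<le> 1 \<and> Lp_norm 2 f < \<delta> \<and> \<not> Lp_norm 2 (T f) < \<epsilon>"
    by blast
  define e where "e = \<epsilon>^2"
  have ee0: "0 < e" using e0 by (simp add: e_def)
  have neg: "\<forall>\<delta>>0. \<exists>f\<in>Lp_space p. (LINT x|unitI. \<bar>f x\<bar> powr p) \<le> 1 \<and> (LINT x|unitI. (f x)^2) < \<delta> \<and> e \<le> (LINT x|unitI. (T f x)^2)"
  proof (intro allI impI)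
    fix \<delta> :: real assume d0: "0 < \<delta>"
    obtain f where f: "f \<in> Lp_space p" and f1: "Lp_norm p f \<le> 1" and f2: "Lp_norm 2 f < sqrt \<delta>"
      and f3: "\<not> Lp_norm 2 (T f) < \<epsilon>"
      using bad[of "sqrt \<delta>"] d0 by auto
    have "(LINT x|unitI. \<bar>f x\<bar> powr p) \<le> 1" using Lpp_le1[OF p0 f1] .
    moreover have "(LINT x|unitI. (f x)^2) < \<delta>"
      using f2 unfolding Lp2_eq by (simp add: real_sqrt_less_iff)
    moreover have "e \<le> (LINT x|unitI. (T f x)^2)"
    proof -
      have "\<epsilon> \<le> sqrt (LINT x|unitI. (T f x)^2)" using f3 unfolding Lp2_eq by simp
      then have "\<epsilon>^2 \<le> (sqrt (LINT x|unitI. (T f x)^2))^2" using e0 by (intro power_mono) auto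
      then show ?thesis unfolding e_def by simp
    qed
    ultimately show "\<exists>f\<in>Lp_space p. (LINT x|unitI. \<bar>f x\<bar> powr p) \<le> 1 \<and> (LINT x|unitI. (f x)^2) < \<delta> \<and> e \<le> (LINT x|unitI. (T f x)^2)"
      using f by blast
  qed
  obtain C where C0: "0 \<le> C" and C: "\<And>u. u\<in>Lp_space p \<Longrightarrow> (LINT x|unitI. \<bar>T u x\<bar> powr p) \<le> C * (LINT x|unitI. \<bar>u x\<bar> powr p)"
    using Tbound[OF p0 T] by auto
  define q where "q = 1 - 2/p"
  have q0: "0 < q" using p2 by (simp add: q_def field_simps)
  define K where "K = 4 * (1 + C) / e"
  have K0: "0 < K" using C0 ee0 by (simp add: K_def)
  obtain n :: nat where n: "K powr (1/q) \<le> real n" using real_arch_simple by blast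
  define N where "N = real (Suc n)"
  have N1: "1 \<le> N" by (simp add: N_def)
  have NK: "K \<le> N powr q"
  proof -
    have "K = (K powr (1/q)) powr q" using K0 q0 by (simp add: powr_powr)
    also have "\<dots> \<le> N powr q" using n q0 by (intro powr_mono2) (auto simp: N_def)
    finally show ?thesis .
  qed
  obtain G where GL: "G \<in> Lp_space p" and Gp: "(LINT x|unitI. \<bar>G x\<bar> powr p) \<le> N"
    and GT: "N * (e/4) < (LINT x|unitI. (T G x)^2)"
    using Iter[OF p2 T ee0 neg, of n] unfolding N_def by blast
  define l where "l = N powr (-1/p)"
  note pk = powr_key[OF p2 N1, folded l_def]
  have TGL: "T G \<in> Lp_space p" using TLp[OF T GL] .
  have "(LINT x|unitI. (T G x)^2) \<le> 1/l^2 + l powr (p-2) * (LINT x|unitI. \<bar>T G x\<bar> powr p)"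
    using Lp_sq(2)[OF p2 pk(1) TGL] .
  also have "\<dots> \<le> 1/l^2 + l powr (p-2) * (C * N)"
  proof -
    have "(LINT x|unitI. \<bar>T G x\<bar> powr p) \<le> C * N"
      using C[OF GL] Gp C0 by (meson mult_left_mono order_trans)
    then show ?thesis by (intro add_left_mono mult_left_mono) auto
  qed
  also have "\<dots> = N powr (2/p) * (1 + C)"
    using pk(2,3) by (simp add: algebra_simps)
  finally have "N * (e/4) < N powr (2/p) * (1 + C)" using GT by linarith
  then have "N powr (2/p) * (N powr q * (e/4)) < N powr (2/p) * (1 + C)"
    using pk(4) unfolding q_def by (simp add: algebra_simps)
  then have "N powr q * (e/4) < 1 + C"
    using N1 by (simp add: mult_less_cancel_left)
  then have "N powr q < K" using ee0 by (simp add: K_def field_simps)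
  then show False using NK by simp
qed


end
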